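(* Let $n>1$. For every index $i=0,\dots,n$ and all $\mathbf x,\mathbf y\in I_{n-1}$ we have $$\bigl\|(\Phi\circ\Delta_i)(\mathbf x)-(\Phi\circ\Delta_i)(\mathbf y)\bigr\|\le c_6\,6^n\,\|\mathbf x-\mathbf y\|,$$ where $c_6=\sqrt3/8$ and $\|\cdot\|$ is the sup-norm.
   Context: $I_m=\{(x_1,\dots,x_m)\in\mathbb{R}^m:-2\le x_1\le\cdots\le x_m\le2\}$. Maps $\Delta_i:I_{n-1}\to I_n$ ($0\le i\le n$): $\Delta_0(x_1,\dots,x_{n-1})=(-2,x_1,\dots,x_{n-1})$; for $0<i<n$, $\Delta_i(x_1,\dots,x_{n-1})=(x_1,\dots,x_{i-1},x_i,x_i,x_{i+1},\dots,x_{n-1})$; $\Delta_n(x_1,\dots,x_{n-1})=(x_1,\dots,x_{n-1},2)$. For $\mathbf c\in\mathbb{R}^n$ let $h_{\mathbf c}=x^n+c_1x^{n-1}+\cdots+c_n$, and for $\mathbf b\in\mathbb{R}^n$ let $g_{\mathbf b}=(x^{2n}+1)+b_1(x^{2n-1}+x)+\cdots+b_{n-1}(x^{n+1}+x^{n-1})+b_nx^n$. $\Psi(\mathbf r)=\mathbf c$ where $(x-r_1)\cdots(x-r_n)=h_{\mathbf c}$; $\mathrm X(\mathbf c)=\mathbf b$ where $x^nh_{\mathbf c}(x+1/x)=g_{\mathbf b}$; $\Phi=\mathrm X\circ\Psi$. *)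

theory Defs
  imports "HOL-Computational_Algebra.Polynomial"
begin

(* Points of R^m are represented as real lists of length m; entry k (0-based) is x_{k+1}. *)

definition I_set :: "nat \<Rightarrow> real list set" where
  "I_set m = {xs. length xs = m \<and> sorted xs \<and> (\<forall>x\<in>set xs. -2 \<le> x \<and> x \<le> 2)}"

definition Delta :: "nat \<Rightarrow> nat \<Rightarrow> real list \<Rightarrow> real list" where
  "Delta n i xs =
     (if i = 0 then (-2) # xs
      else if i = n then xs @ [2]
      else take i xs @ [xs ! (i - 1)] @ drop i xs)"

definition h_poly :: "real list \<Rightarrow> real poly" where
  "h_poly c = (let n = length c in
     monom 1 n + (\<Sum>k=1..n. monom (c ! (k - 1)) (n - k)))"

(* Psi(r) = c where (x-r_1)...(x-r_n) = h_c *)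
definition Psi :: "real list \<Rightarrow> real list" where
  "Psi rs = (let n = length rs; h = (\<Prod>r\<leftarrow>rs. [:-r, 1:]) in
     map (\<lambda>k. coeff h (n - k)) [1..<n+1])"

(* x^n h_c(x + 1/x), written out as a polynomial:
   sum over j of c_j x^j (x^2+1)^(n-j), with c_0 = 1 *)
definition palin_poly :: "real list \<Rightarrow> real poly" where
  "palin_poly c = (let n = length c in
     (\<Sum>j=0..n. smult (if j = 0 then 1 else c ! (j - 1)) (monom 1 j * [:1, 0, 1:] ^ (n - j))))"

definition g_poly :: "real list \<Rightarrow> real poly" where
  "g_poly b = (let n = length b in
     monom 1 (2*n) + 1 + (\<Sum>k=1..n-1. smult (b ! (k - 1)) (monom 1 (2*n-k) + monom 1 k))
       + (if n = 0 then 0 else monom (b ! (n - 1)) n))"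

(* X(c) = b where x^n h_c(x+1/x) = g_b : b_k is the coefficient of x^(2n-k) *)
definition Xmap :: "real list \<Rightarrow> real list" where
  "Xmap c = (let n = length c in map (\<lambda>k. coeff (palin_poly c) (2*n - k)) [1..<n+1])"

definition Phi :: "real list \<Rightarrow> real list" where
  "Phi = Xmap \<circ> Psi"

definition supnorm :: "real list \<Rightarrow> real" where
  "supnorm xs = Max (insert 0 (abs ` set xs))"

definition vdiff :: "real list \<Rightarrow> real list \<Rightarrow> real list" where
  "vdiff xs ys = map2 (-) xs ys"

end

theory Submission
  imports Defs
begin


definition maj :: "real poly \<Rightarrow> real poly \<Rightarrow> bool" where
  "maj p q \<longleftrightarrow> (\<forall>i. \<bar>coeff p i\<bar> \<le> coeff q i)"

lemma maj_nonneg: "maj p q \<Longrightarrow> 0 \<le> coeff q i"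
  unfolding maj_def by (meson abs_ge_zero order_trans)

lemma maj_add: "maj p1 q1 \<Longrightarrow> maj p2 q2 \<Longrightarrow> maj (p1 + p2) (q1 + q2)"
  unfolding maj_def by (auto intro: order_trans[OF abs_triangle_ineq add_mono])

lemma maj_mult: assumes "maj p1 q1" "maj p2 q2" shows "maj (p1 * p2) (q1 * q2)"
  unfolding maj_def
proof
  fix n
  have "\<bar>coeff (p1*p2) n\<bar> \<le> (\<Sum>i\<le>n. \<bar>coeff p1 i * coeff p2 (n-i)\<bar>)"
    unfolding coeff_mult by (rule sum_abs)
  also have "\<dots> \<le> (\<Sum>i\<le>n. coeff q1 i * coeff q2 (n-i))"
    apply (rule sum_mono) unfolding abs_mult
    using assms by (intro mult_mono) (auto simp: maj_def maj_nonneg)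
  finally show "\<bar>coeff (p1*p2) n\<bar> \<le> coeff (q1*q2) n" unfolding coeff_mult .
qed

lemma maj_smult: "maj p q \<Longrightarrow> \<bar>a\<bar> \<le> b \<Longrightarrow> maj (smult a p) (smult b q)"
  unfolding maj_def using maj_nonneg
  by (auto simp: abs_mult intro: mult_mono)

lemma maj_zero: "maj 0 0" by (simp add: maj_def)

definition Pf :: "real list \<Rightarrow> real poly" where
  "Pf r = prod_list (map (\<lambda>a. [:1, -a, 1:]) r)"

lemma maj_factor: "\<bar>a\<bar> \<le> 2 \<Longrightarrow> maj [:1, -a, 1:] ([:1,1:]^2)"
  unfolding maj_def
  apply (auto simp: power2_eq_square coeff_pCons split: nat.splits)
  done

lemma maj_Pf: "\<forall>a\<in>set r. \<bar>a\<bar> \<le> 2 \<Longrightarrow> maj (Pf r) ([:1,1:]^(2*length r))"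
proof (induction r)
  case Nil then show ?case by (simp add: Pf_def maj_def)
next
  case (Cons a r)
  have "maj ([:1, -a, 1:] * Pf r) ([:1,1:]^2 * [:1,1:]^(2*length r))"
    using Cons by (intro maj_mult maj_factor) auto
  then show ?case by (simp add: Pf_def power_add[symmetric])
qed

lemma maj_diff:
  assumes "length r = length s" "\<forall>a\<in>set r. \<bar>a\<bar> \<le> 2" "\<forall>a\<in>set s. \<bar>a\<bar> \<le> 2"
    "\<forall>l<length r. \<bar>r!l - s!l\<bar> \<le> d"
  shows "maj (Pf r - Pf s) (smult (of_nat (length r) * d) ([:0,1:] * [:1,1:]^(2*(length r - 1))))"
  using assms
proof (induction r arbitrary: s)
  case Nil then show ?case by (simp add: maj_def)
next
  case (Cons a r s0)
  then obtain b s where s0: "s0 = b # s" by (cases s0) auto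
  have d0: "\<bar>a - b\<bar> \<le> d" using Cons.prems(4) s0 by auto
  have IH: "maj (Pf r - Pf s) (smult (of_nat (length r) * d) ([:0,1:] * [:1,1:]^(2*(length r - 1))))"
    using Cons s0 by (intro Cons.IH) (auto)
  have e: "Pf (a#r) - Pf s0 = [:0, b - a:] * Pf r + [:1,-b,1:] * (Pf r - Pf s)"
    by (simp add: Pf_def s0 algebra_simps flip: smult_add_left)
  have m1: "maj ([:0, b - a:] * Pf r) (smult d [:0,1:] * [:1,1:]^(2*length r))"
    apply (intro maj_mult maj_Pf)
    using d0 Cons.prems apply (auto simp: maj_def coeff_pCons split: nat.splits)
    done
  have m2: "maj ([:1,-b,1:] * (Pf r - Pf s)) ([:1,1:]^2 * smult (of_nat (length r) * d) ([:0,1:] * [:1,1:]^(2*(length r - 1))))"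
    using Cons.prems s0 by (intro maj_mult maj_factor IH) auto
  have "smult d [:0,1:] * [:1,1:]^(2*length r) + [:1,1:]^2 * smult (of_nat (length r) * d) ([:0,1:] * [:1,1:]^(2*(length r - 1)))
     = smult (of_nat (length (a#r)) * d) ([:0,1:] * [:1,1:]^(2*(length (a#r) - 1)))"
  proof (cases "length r")
    case 0 then show ?thesis by simp
  next
    case (Suc k)
    have "[:1,1:]^2 * [:1,1:]^(2*(length r - 1)) = ([:1,1:]^(2*length r) :: real poly)"
      by (simp add: Suc power_add[symmetric])
    then have "[:1,1:]^2 * smult (of_nat (length r) * d) ([:0,1:] * [:1,1:]^(2*(length r - 1)))
       = smult (of_nat (length r) * d) ([:0,1:] * ([:1,1:]^(2*length r) :: real poly))"
      by (metis (no_types, lifting) mult.left_commute mult_smult_right)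
    moreover have "smult d [:0,1:] * [:1,1:]^(2*length r) = smult d ([:0,1:] * ([:1,1:]^(2*length r) :: real poly))"
      by simp
    ultimately show ?thesis using Suc by (simp only: smult_add_left[symmetric]) (simp add: algebra_simps)
  qed
  then show ?case using maj_add[OF m1 m2] e by simp
qed



definition Hf :: "real list \<Rightarrow> real poly" where
  "Hf r = prod_list (map (\<lambda>a. [:-a, 1:]) r)"

lemma Hf_deg: "degree (Hf r) = length r \<and> coeff (Hf r) (length r) = 1"
proof (induction r)
  case Nil then show ?case by (simp add: Hf_def)
next
  case (Cons a r)
  have nz: "Hf r \<noteq> 0" using Cons by auto
  have hh: "Hf (a#r) = [:-a,1:] * Hf r" by (simp add: Hf_def del: mult_pCons_left)
  have d1: "degree (Hf (a#r)) = 1 + degree (Hf r)"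
    unfolding hh using nz degree_mult_eq[of "[:-a,1:]" "Hf r"] by (simp del: mult_pCons_left)
  have "coeff (Hf r) (Suc (length r)) = 0" using Cons by (simp add: coeff_eq_0)
  then have c1: "coeff (Hf (a#r)) (length (a#r)) = 1"
    using Cons unfolding hh by (simp add: coeff_pCons)
  show ?case using d1 c1 Cons.IH by simp
qed

lemma Psi_len: "length (Psi r) = length r"
  by (simp add: Psi_def Let_def del: upt_Suc)

lemma Psi_nth: "1 \<le> j \<Longrightarrow> j \<le> length r \<Longrightarrow> Psi r ! (j - 1) = coeff (Hf r) (length r - j)"
proof -
  assume a: "1 \<le> j" "j \<le> length r"
  then have "[1..<length r + 1] ! (j - 1) = j" by (subst nth_upt) auto
  then show ?thesis using a by (simp add: Psi_def Let_def Hf_def del: upt_Suc)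
qed

lemma poly_Hf: "poly (Hf r) z = (\<Prod>a\<leftarrow>r. z - a)"
  by (induction r) (auto simp: Hf_def algebra_simps)

lemma poly_Pf: "poly (Pf r) x = (\<Prod>a\<leftarrow>r. x^2 - a*x + 1)"
  by (induction r) (auto simp: Pf_def algebra_simps power2_eq_square)

lemma prod_scale: "(x::real) \<noteq> 0 \<Longrightarrow> x ^ length r * (\<Prod>a\<leftarrow>r. (x + 1/x) - a) = (\<Prod>a\<leftarrow>r. x^2 - a*x + 1)"
  by (induction r) (auto simp: field_simps power2_eq_square)

lemma palin_eval:
  assumes "(x::real) \<noteq> 0"
  shows "poly (palin_poly (Psi r)) x = poly (Pf r) x"
proof -
  let ?n = "length r"
  let ?h = "Hf r"
  have cf: "(if j = 0 then 1 else Psi r ! (j - 1)) = coeff ?h (?n - j)" if "j \<le> ?n" for j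
    using that Hf_deg[of r] Psi_nth[of j r] by auto
  have "poly (palin_poly (Psi r)) x = (\<Sum>j=0..?n. coeff ?h (?n - j) * (x^j * (x^2+1)^(?n-j)))"
    unfolding palin_poly_def Let_def Psi_len
    by (auto simp: poly_sum poly_monom power2_eq_square cf add.commute intro!: sum.cong)
  also have "\<dots> = (\<Sum>m=0..?n. coeff ?h m * (x^(?n-m) * (x^2+1)^m))"
    using sum.atLeastAtMost_rev[of "\<lambda>j. coeff ?h (?n - j) * (x^j * (x^2+1)^(?n-j))" 0 ?n]
    by (auto intro!: sum.cong)
  also have "\<dots> = (\<Sum>m=0..?n. x^?n * (coeff ?h m * (x + 1/x)^m))"
  proof (intro sum.cong refl)
    fix m assume "m \<in> {0..?n}"
    then have "x^?n = x^(?n-m) * x^m" by (simp add: power_add[symmetric])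
    moreover have "x^m * (x+1/x)^m = (x^2+1)^m"
      using assms by (simp add: power_mult_distrib[symmetric] field_simps power2_eq_square)
    ultimately show "coeff ?h m * (x^(?n-m) * (x^2+1)^m) = x^?n * (coeff ?h m * (x + 1/x)^m)"
      by (metis mult.assoc mult.left_commute)
  qed
  also have "\<dots> = x^?n * poly ?h (x + 1/x)"
    using Hf_deg[of r] by (simp add: poly_altdef sum_distrib_left atLeast0AtMost)
  also have "\<dots> = poly (Pf r) x"
    using prod_scale[OF assms, of r] by (simp add: poly_Hf poly_Pf)
  finally show ?thesis .
qed

lemma palin_Pf: "palin_poly (Psi r) = Pf r"
proof (rule ccontr)
  assume ne: "palin_poly (Psi r) \<noteq> Pf r"
  then have "finite {x. poly (palin_poly (Psi r) - Pf r) x = 0}"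
    by (intro poly_roots_finite) simp
  moreover have "{x::real. x \<noteq> 0} \<subseteq> {x. poly (palin_poly (Psi r) - Pf r) x = 0}"
    using palin_eval by auto
  moreover have "infinite {x::real. x \<noteq> 0}"
  proof
    assume "finite {x::real. x \<noteq> 0}"
    then have "finite (insert 0 {x::real. x \<noteq> 0})" by simp
    moreover have "insert 0 {x::real. x \<noteq> 0} = UNIV" by auto
    ultimately show False using infinite_UNIV_char_0 by metis
  qed
  ultimately show False using finite_subset by blast
qed

lemma Phi_len: "length (Phi r) = length r"
  by (simp add: Phi_def Xmap_def Let_def Psi_len del: upt_Suc)

lemma Phi_nth: "k < length r \<Longrightarrow> Phi r ! k = coeff (Pf r) (2 * length r - (k+1))"
  by (simp add: Phi_def Xmap_def Let_def Psi_len palin_Pf del: upt_Suc)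



lemma choose_le_pow: "Suc m choose k \<le> 2 ^ m"
proof (induction m arbitrary: k)
  case 0
  have "(0::nat) choose j \<le> 1" for j by (cases j) auto
  then show ?case by (cases k) auto
next
  case (Suc m)
  show ?case
  proof (cases k)
    case 0 then show ?thesis by simp
  next
    case (Suc k')
    have "Suc (Suc m) choose k = (Suc m choose k') + (Suc m choose Suc k')" by (simp only: Suc binomial_Suc_Suc)
    also have "\<dots> \<le> 2^m + 2^m" using Suc.IH by (intro add_mono) blast+
    finally show ?thesis by simp
  qed
qed

lemma coeff_bound:
  assumes "N \<ge> 1"
  shows "coeff ([:0,1:] * [:1,1:]^N :: real poly) t \<le> 2 ^ (N - 1)"
proof -
  have "coeff ([:0,1:] * [:1,1:]^N :: real poly) t = (if t = 0 then 0 else coeff ([:1,1:]^N :: real poly) (t - 1))"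
    by (cases t) (auto simp: coeff_pCons)
  moreover have "coeff ([:1,1:]^N :: real poly) j \<le> 2 ^ (N - 1)" for j
  proof (cases "j \<le> N")
    case True
    then have "coeff ([:1,1:]^N :: real poly) j = real (N choose j)"
      by (simp add: coeff_linear_poly_power)
    also have "\<dots> \<le> 2 ^ (N - 1)"
      using choose_le_pow[of "N - 1" j] assms
    proof -
      have "N choose j \<le> 2 ^ (N - 1)" using choose_le_pow[of "N - 1" j] assms by simp
      then have "real (N choose j) \<le> real (2 ^ (N - 1))" by (rule of_nat_mono)
      then show ?thesis by simp
    qed
    finally show ?thesis .
  next
    case False
    then have "degree ([:1,1:]^N :: real poly) < j"
      using degree_power_le[of "[:1,1::real:]" N] by simp
    then show ?thesis by (simp add: coeff_eq_0)
  qed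
  ultimately show ?thesis by simp
qed

lemma pow_lin: "2 \<le> n \<Longrightarrow> real n \<le> (3/2)^n"
proof (induction n rule: dec_induct)
  case base then show ?case by (simp add: power2_eq_square)
next
  case (step n)
  have "(3/2::real)^2 \<le> (3/2)^n" using step by (intro power_increasing) auto
  then have "(2::real) \<le> (3/2)^n" by (simp add: power2_eq_square)
  then show ?case using step by simp
qed

lemma num_bound: "2 \<le> n \<Longrightarrow> real n * 4^n \<le> 6^n"
proof -
  assume "2 \<le> n"
  then have "real n * 4^n \<le> (3/2)^n * 4^n" using pow_lin by (intro mult_right_mono) auto
  also have "\<dots> = 6^n" by (simp flip: power_mult_distrib)
  finally show ?thesis .
qed

lemma supnorm_nonneg: "0 \<le> supnorm xs"
  unfolding supnorm_def by (simp add: Max_ge_iff)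

lemma supnorm_ge: "t < length xs \<Longrightarrow> \<bar>xs ! t\<bar> \<le> supnorm xs"
  unfolding supnorm_def by (simp add: Max_ge_iff)

lemma supnorm_le: "0 \<le> B \<Longrightarrow> (\<And>t. t < length xs \<Longrightarrow> \<bar>xs ! t\<bar> \<le> B) \<Longrightarrow> supnorm xs \<le> B"
  unfolding supnorm_def by (auto simp: in_set_conv_nth)

lemma Delta_len: "length x = n - 1 \<Longrightarrow> 1 < n \<Longrightarrow> i \<le> n \<Longrightarrow> length (Delta n i x) = n"
  by (auto simp: Delta_def)

lemma Delta_nth:
  assumes "length x = n - 1" "1 < n" "i \<le> n" "l < n"
  shows "Delta n i x ! l = (if i = 0 then (if l = 0 then -2 else x!(l-1))
     else if i = n then (if l < n - 1 then x!l else 2)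
     else (if l < i then x!l else x!(l-1)))"
proof -
  consider "i = 0" | "i = n" | "0 < i" "i < n" using assms by linarith
  then show ?thesis
  proof cases
    case 1
    then have "Delta n i x = (-2) # x" by (simp add: Delta_def)
    then show ?thesis using 1 by (simp add: nth_Cons')
  next
    case 2
    then have e: "Delta n i x = x @ [2]" using assms by (simp add: Delta_def)
    show ?thesis
    proof (cases "l < n - 1")
      case True then show ?thesis using 2 e assms by (simp add: nth_append)
    next
      case False then have "l = length x" using assms by simp
      then have "Delta n i x ! l = 2" using e by simp
      then show ?thesis using 2 False assms by simp
    qed
  next
    case 3
    have e: "Delta n i x = take i x @ ([x ! (i - 1)] @ drop i x)" using 3 by (simp add: Delta_def)
    have lt: "length (take i x) = i" using 3 assms by simp
    show ?thesis
    proof (cases "l < i")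
      case True
      then have "Delta n i x ! l = take i x ! l" unfolding e using lt by (simp only: nth_append) simp
      then show ?thesis using True 3 by simp
    next
      case False
      then have "Delta n i x ! l = ([x ! (i - 1)] @ drop i x) ! (l - i)" unfolding e using lt by (simp only: nth_append) simp
      also have "\<dots> = x ! (l - 1)"
      proof (cases "l = i")
        case True then show ?thesis by simp
      next
        case F2: False
        then have "([x ! (i - 1)] @ drop i x) ! (l - i) = drop i x ! (l - i - 1)"
          using False by (simp add: nth_append)
        also have "\<dots> = x ! (i + (l - i - 1))" using 3 assms False F2 by (subst nth_drop) auto
        also have "i + (l - i - 1) = l - 1" using False F2 by simp
        finally show ?thesis .
      qed
      finally show ?thesis using False 3 by simp
    qed
  qed
qed



theorem lemma2p3p3:
  fixes n i :: nat and x y :: "real list"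
  assumes "n > 1" and "i \<le> n"
    and "x \<in> I_set (n - 1)" and "y \<in> I_set (n - 1)"
  shows "supnorm (vdiff (Phi (Delta n i x)) (Phi (Delta n i y)))
           \<le> (sqrt 3 / 8) * 6 ^ n * supnorm (vdiff x y)"
proof -
  define r where "r = Delta n i x"
  define s where "s = Delta n i y"
  define d where "d = supnorm (vdiff x y)"
  have lx: "length x = n - 1" and ly: "length y = n - 1"
    using assms by (auto simp: I_set_def)
  have bx: "\<And>t. t < n - 1 \<Longrightarrow> \<bar>x ! t\<bar> \<le> 2"
  proof -
    fix t assume "t < n - 1"
    then have "x ! t \<in> set x" using lx by simp
    then show "\<bar>x ! t\<bar> \<le> 2" using assms(3) unfolding I_set_def by (auto simp: abs_le_iff)
  qed
  have by': "\<And>t. t < n - 1 \<Longrightarrow> \<bar>y ! t\<bar> \<le> 2"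
  proof -
    fix t assume "t < n - 1"
    then have "y ! t \<in> set y" using ly by simp
    then show "\<bar>y ! t\<bar> \<le> 2" using assms(4) unfolding I_set_def by (auto simp: abs_le_iff)
  qed
  have dxy: "\<And>t. t < n - 1 \<Longrightarrow> \<bar>x ! t - y ! t\<bar> \<le> d"
  proof -
    fix t assume t: "t < n - 1"
    have "vdiff x y ! t = x ! t - y ! t" using t lx ly by (simp add: vdiff_def)
    moreover have "t < length (vdiff x y)" using t lx ly by (simp add: vdiff_def)
    ultimately show "\<bar>x ! t - y ! t\<bar> \<le> d" unfolding d_def using supnorm_ge[of t "vdiff x y"] by simp
  qed
  have d0: "0 \<le> d" unfolding d_def by (rule supnorm_nonneg)
  have lr: "length r = n" and ls: "length s = n"
    using Delta_len assms lx ly r_def s_def by auto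
  have rn: "\<And>l. l < n \<Longrightarrow> r ! l = (if i = 0 then (if l = 0 then -2 else x!(l-1))
     else if i = n then (if l < n - 1 then x!l else 2)
     else (if l < i then x!l else x!(l-1)))"
    unfolding r_def using Delta_nth[OF lx] assms by simp
  have sn: "\<And>l. l < n \<Longrightarrow> s ! l = (if i = 0 then (if l = 0 then -2 else y!(l-1))
     else if i = n then (if l < n - 1 then y!l else 2)
     else (if l < i then y!l else y!(l-1)))"
    unfolding s_def using Delta_nth[OF ly] assms by simp
  have cases: "(r!l = s!l \<and> \<bar>r!l\<bar> \<le> 2) \<or> (\<exists>t<n-1. r!l = x!t \<and> s!l = y!t)" if l: "l < n" for l
  proof -
    consider "i = 0" "l = 0" | "i = 0" "l > 0" | "i = n" "l < n - 1" | "i = n" "\<not> l < n - 1"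
      | "0 < i" "i < n" "l < i" | "0 < i" "i < n" "\<not> l < i" using assms(2) by linarith
    then show ?thesis
    proof cases
      case 1 then have "r!l = -2" "s!l = -2" using rn[OF l] sn[OF l] by simp_all
      then show ?thesis by simp
    next
      case 2 then have "r!l = x!(l-1)" "s!l = y!(l-1)" "l - 1 < n - 1" using rn[OF l] sn[OF l] l by simp_all
      then show ?thesis by blast
    next
      case 3 then have "r!l = x!l" "s!l = y!l" using rn[OF l] sn[OF l] assms(1) by simp_all
      then show ?thesis using 3 by blast
    next
      case 4 then have "r!l = 2" "s!l = 2" using rn[OF l] sn[OF l] assms(1) by simp_all
      then show ?thesis by simp
    next
      case 5 then have "r!l = x!l" "s!l = y!l" "l < n - 1" using rn[OF l] sn[OF l] by simp_all
      then show ?thesis by blast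
    next
      case 6 then have "r!l = x!(l-1)" "s!l = y!(l-1)" "l - 1 < n - 1" using rn[OF l] sn[OF l] l by simp_all
      then show ?thesis by blast
    qed
  qed
  have br: "\<forall>a\<in>set r. \<bar>a\<bar> \<le> 2"
  proof
    fix a assume "a \<in> set r"
    then obtain l where l: "l < n" "a = r ! l" using lr by (auto simp: in_set_conv_nth)
    show "\<bar>a\<bar> \<le> 2" using cases[OF l(1)] bx l(2) by auto
  qed
  have bs: "\<forall>a\<in>set s. \<bar>a\<bar> \<le> 2"
  proof
    fix a assume "a \<in> set s"
    then obtain l where l: "l < n" "a = s ! l" using ls by (auto simp: in_set_conv_nth)
    show "\<bar>a\<bar> \<le> 2" using cases[OF l(1)] by' l(2) by auto
  qed
  have drs: "\<forall>l<length r. \<bar>r!l - s!l\<bar> \<le> d"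
  proof (intro allI impI)
    fix l assume "l < length r"
    then have l: "l < n" using lr by simp
    show "\<bar>r!l - s!l\<bar> \<le> d" using cases[OF l] dxy d0 by auto
  qed
  have M: "maj (Pf r - Pf s) (smult (of_nat n * d) ([:0,1:] * [:1,1:]^(2*(n - 1))))"
    using maj_diff[OF _ br bs drs] lr ls by simp
  have key: "\<bar>coeff (Pf r - Pf s) m\<bar> \<le> real n * d * 2 ^ (2*n - 3)" for m
  proof -
    have "\<bar>coeff (Pf r - Pf s) m\<bar> \<le> real n * d * coeff ([:0,1:] * [:1,1:]^(2*(n - 1)) :: real poly) m"
      using M unfolding maj_def coeff_smult by blast
    also have "\<dots> \<le> real n * d * 2 ^ (2*(n-1) - 1)"
      using coeff_bound[of "2*(n-1)" m] assms d0 by (intro mult_left_mono) auto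
    also have "2*(n-1) - 1 = 2*n - 3" by simp
    finally show ?thesis .
  qed
  have num: "real n * d * 2 ^ (2*n - 3) \<le> (sqrt 3 / 8) * 6 ^ n * d"
  proof -
    have e: "(2::real) ^ (2*n - 3) * 8 = 4 ^ n"
    proof -
      have "(2::real) ^ (2*n - 3) * 8 = 2 ^ (2*n - 3 + 3)" by (simp add: power_add)
      also have "2*n - 3 + 3 = 2 * n" using assms by simp
      finally show ?thesis by (simp add: power_mult)
    qed
    have "real n * 4^n \<le> 6^n" using num_bound assms by simp
    also have "(6::real)^n \<le> sqrt 3 * 6^n"
    proof -
      have "(1::real) \<le> sqrt 3" by simp
      then have "1 * (6::real)^n \<le> sqrt 3 * 6^n" by (intro mult_right_mono) auto
      then show ?thesis by simp
    qed
    finally have "real n * (2 ^ (2*n - 3) * 8) \<le> sqrt 3 * 6^n" using e by simp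
    then have "real n * 2 ^ (2*n - 3) \<le> sqrt 3 / 8 * 6^n" by simp
    then have "(real n * 2 ^ (2*n - 3)) * d \<le> (sqrt 3 / 8 * 6^n) * d" using d0 by (rule mult_right_mono)
    then show ?thesis by (simp add: ac_simps)
  qed
  have "supnorm (vdiff (Phi r) (Phi s)) \<le> (sqrt 3 / 8) * 6 ^ n * d"
  proof (rule supnorm_le)
    show "0 \<le> (sqrt 3 / 8) * 6 ^ n * d" using d0 by simp
  next
    fix t assume "t < length (vdiff (Phi r) (Phi s))"
    then have t: "t < n" by (simp add: vdiff_def Phi_len lr ls)
    have eq: "vdiff (Phi r) (Phi s) ! t = coeff (Pf r - Pf s) (2*n - (t+1))"
      using t by (simp add: vdiff_def Phi_len lr ls Phi_nth)
    show "\<bar>vdiff (Phi r) (Phi s) ! t\<bar> \<le> (sqrt 3 / 8) * 6 ^ n * d"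
      unfolding eq by (rule order_trans[OF key num])
  qed
  then show ?thesis unfolding r_def s_def d_def .
qed

end
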